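(* Let $\mathcal{I}$ be an instance of SNSAT with $|\mathcal{I}|=n$, and let $\mathcal{K}_\mathcal{I}$ and $\psi_0,\dots,\psi_{n+1}$ be the Kripke structure and formulas associated with $\mathcal{I}$ as described in the context. Then for all $0\le k\le n+1$ and all $r\in\{1,\dots,n\}$: (1) if $k\ge r$, then $v_\mathcal{I}(x_r)=\top$ iff $\mathcal{K}_\mathcal{I},w_{x_r}\models\psi_k$ (where $w_{x_r}$ denotes the track of length one consisting of that state); (2) if $k\ge r+1$, then $v_\mathcal{I}(x_r)=\bot$ iff $\mathcal{K}_\mathcal{I},\overline{w_{x_r}}\models\psi_k$.
   Context: SNSAT: an instance $\mathcal{I}$ consists of Boolean variables $X=\{x_1,\dots,x_n\}$ and propositional formulas $F_1(Z_1),F_2(x_1,Z_2),\dots,F_n(x_1,\dots,x_{n-1},Z_n)$, where $F_i$ uses variables among $x_1,\dots,x_{i-1}$ and $Z_i=\{z_i^1,\dots,z_i^{j_i}\}$, the sets $Z_i$ being pairwise disjoint and disjoint from $X$; $|\mathcal{I}|=n$. The valuation $v_\mathcal{I}$ of $X$ is defined by $v_\mathcal{I}(x_i)=\top$ iff $F_i(v_\mathcal{I}(x_1),\dots,v_\mathcal{I}(x_{i-1}),Z_i)$ is satisfiable. Kripke structures, tracks and semantics: a finite Kripke structure $(\mathcal{AP},W,\delta,\mu,w_0)$ has left-total $\delta\subseteq W\times W$ and labelling $\mu:W\to2^{\mathcal{AP}}$; a track is a nonempty finite sequence of states consecutive in $\delta$; $\mathrm{fst},\mathrm{lst}$ are its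 first/last state. Formulas use proposition letters, $\neg,\wedge$ (other connectives as abbreviations), $\top,\bot$, $\langle A\rangle$, $\langle B\rangle$, $[B]\psi=\neg\langle B\rangle\neg\psi$. $\rho\models p$ iff $p\in\mu(w)$ for all states $w$ of $\rho$; $\rho\models\langle A\rangle\psi$ iff some track $\rho'$ with $\mathrm{fst}(\rho')=\mathrm{lst}(\rho)$ satisfies $\psi$; $\rho\models\langle B\rangle\psi$ iff some proper prefix $\rho(1,i)$, $1\le i<|\rho|$, satisfies $\psi$. The $F_i$ are read as formulas over proposition letters $X\cup Z$. Construction: let $Z=\bigcup_iZ_i$, $R=\{r_1,\dots,r_n\}$, $R_i=R\setminus\{r_i\}$. $\mathcal{K}_\mathcal{I}$ has proposition letters $X\cup Z\cup\{s,t\}\cup R\cup\{p_{\overline{x_i}}:1\le i\le n\}$ and distinct states $s_0$ and, for each $i$, $w_{x_i},\overline{w_{x_i}},\overline{s_i}$, and $w_{z_i^u},\overline{w_{z_i^u}}$ for $1\le u\le j_i$. Labels: $\mu(w_{x_i})=X\cup Z\cup\{s,t\}\cup R_i$; $\mu(\overline{w_{x_i}})=(X\setminus\{x_i\})\cup Z\cup\{s,t\}\cup R_i\cup\{p_{\overline{x_i}}\}$; $\mu(w_{z_i^u})=X\cup Z\cup\{s,t\}\cup R_i$; $\mu(\overline{w_{z_i^u}})=X\cup(Z\setminus\{z_i^u\})\cup\{s,t\}\cup R_i$; $\mu(\overline{s_i})=X\cup Z\cup\{t\}\cup R_i$; $\mu(s_0)=X\cup Z\cup\{s\}\cup R$.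 Call $L_i^0=\{w_{x_i},\overline{w_{x_i}}\}$ and $L_i^u=\{w_{z_i^u},\overline{w_{z_i^u}}\}$ for $1\le u\le j_i$. Transitions: $\overline{w_{x_i}}\to\overline{s_i}\to w_{x_i}$; every state of $L_i^{u}$ has an edge to both states of $L_i^{u+1}$ for $0\le u<j_i$; every state of $L_i^{j_i}$ has an edge to both states of $L_{i-1}^0$ if $i\ge2$, and to $s_0$ if $i=1$; $s_0\to s_0$. The initial state is $w_{x_n}$. Formulas: $\ell_{=2}=\langle B\rangle\top\wedge[B][B]\bot$; $\psi_0=\bot$ and for $k\ge1$, $\psi_k=\langle A\rangle\varphi_k$ with $\varphi_k=(s\wedge\neg t)\wedge\bigwedge_{i=1}^n\big((x_i\wedge\neg r_i)\to F_i(x_1,\dots,x_{i-1},Z_i)\big)\wedge[B]\Big(\big(\bigvee_{i=1}^n\langle A\rangle p_{\overline{x_i}}\big)\to\langle A\rangle\big(\neg s\wedge\ell_{=2}\wedge\langle A\rangle(\ell_{=2}\wedge\neg\psi_{k-1})\big)\Big)$. *)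

theory Defs
  imports Main
begin

text \<open>Variables of an SNSAT instance: X m is x_m, Z i u is z_i^u.\<close>
datatype var = X nat | Z nat nat

datatype pform = PVar var | PNot pform | PAnd pform pform | POr pform pform | PTop | PBot

primrec peval :: "(var \<Rightarrow> bool) \<Rightarrow> pform \<Rightarrow> bool" where
  "peval \<sigma> (PVar v) = \<sigma> v"
| "peval \<sigma> (PNot f) = (\<not> peval \<sigma> f)"
| "peval \<sigma> (PAnd f g) = (peval \<sigma> f \<and> peval \<sigma> g)"
| "peval \<sigma> (POr f g) = (peval \<sigma> f \<or> peval \<sigma> g)"
| "peval \<sigma> PTop = True"
| "peval \<sigma> PBot = False"

primrec pvars :: "pform \<Rightarrow> var set" where
  "pvars (PVar v) = {v}"
| "pvars (PNot f) = pvars f"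
| "pvars (PAnd f g) = pvars f \<union> pvars g"
| "pvars (POr f g) = pvars f \<union> pvars g"
| "pvars PTop = {}"
| "pvars PBot = {}"

text \<open>An SNSAT instance of size n: the number j i of Z-variables of F_i and the
  formulas F i (1 \<le> i \<le> n).  Well-formedness: F_i uses only x_1..x_{i-1} and
  Z_i = {z_i^1,...,z_i^{j_i}}.\<close>
definition snsat_wf :: "nat \<Rightarrow> (nat \<Rightarrow> nat) \<Rightarrow> (nat \<Rightarrow> pform) \<Rightarrow> bool" where
  "snsat_wf n j F \<longleftrightarrow>
     (\<forall>i. 1 \<le> i \<and> i \<le> n \<longrightarrow>
        pvars (F i) \<subseteq> {X m | m. 1 \<le> m \<and> m < i} \<union> {Z i u | u. 1 \<le> u \<and> u \<le> j i})"

definition sat_with :: "pform \<Rightarrow> (nat \<Rightarrow> bool) \<Rightarrow> bool" where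
  "sat_with f val \<longleftrightarrow>
     (\<exists>\<zeta>. peval (\<lambda>v. case v of X m \<Rightarrow> val m | Z a b \<Rightarrow> \<zeta> a b) f)"

primrec snsat_vals :: "(nat \<Rightarrow> pform) \<Rightarrow> nat \<Rightarrow> nat \<Rightarrow> bool" where
  "snsat_vals F 0 = (\<lambda>_. False)"
| "snsat_vals F (Suc k) = (snsat_vals F k)(Suc k := sat_with (F (Suc k)) (snsat_vals F k))"

text \<open>v_I(x_i) = True iff F_i(v_I(x_1),...,v_I(x_{i-1}),Z_i) is satisfiable.\<close>
definition snsat_val :: "nat \<Rightarrow> (nat \<Rightarrow> pform) \<Rightarrow> nat \<Rightarrow> bool" where
  "snsat_val n F i = snsat_vals F n i"

record ('p, 's) kripke =
  kW :: "'s set"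
  kdelta :: "('s \<times> 's) set"
  kmu :: "'s \<Rightarrow> 'p set"
  kw0 :: "'s"

definition is_track :: "('p, 's) kripke \<Rightarrow> 's list \<Rightarrow> bool" where
  "is_track K \<rho> \<longleftrightarrow> \<rho> \<noteq> [] \<and> set \<rho> \<subseteq> kW K \<and>
     (\<forall>i. i + 1 < length \<rho> \<longrightarrow> (\<rho> ! i, \<rho> ! (i + 1)) \<in> kdelta K)"

datatype 'p hs = HProp 'p | HNeg "'p hs" | HAnd "'p hs" "'p hs" | HTop | HBot
  | HA "'p hs" | HB "'p hs"

primrec hs_sat :: "('p, 's) kripke \<Rightarrow> 's list \<Rightarrow> 'p hs \<Rightarrow> bool" where
  "hs_sat K \<rho> (HProp p) = (\<forall>w \<in> set \<rho>. p \<in> kmu K w)"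
| "hs_sat K \<rho> (HNeg \<psi>) = (\<not> hs_sat K \<rho> \<psi>)"
| "hs_sat K \<rho> (HAnd \<psi> \<chi>) = (hs_sat K \<rho> \<psi> \<and> hs_sat K \<rho> \<chi>)"
| "hs_sat K \<rho> HTop = True"
| "hs_sat K \<rho> HBot = False"
| "hs_sat K \<rho> (HA \<psi>) = (\<exists>\<rho>'. is_track K \<rho>' \<and> hd \<rho>' = last \<rho> \<and> hs_sat K \<rho>' \<psi>)"
| "hs_sat K \<rho> (HB \<psi>) = (\<exists>i. 1 \<le> i \<and> i < length \<rho> \<and> hs_sat K (take i \<rho>) \<psi>)"

definition HOr :: "'p hs \<Rightarrow> 'p hs \<Rightarrow> 'p hs" where
  "HOr a b = HNeg (HAnd (HNeg a) (HNeg b))"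
definition HImp :: "'p hs \<Rightarrow> 'p hs \<Rightarrow> 'p hs" where
  "HImp a b = HNeg (HAnd a (HNeg b))"
definition HBoxB :: "'p hs \<Rightarrow> 'p hs" where
  "HBoxB a = HNeg (HB (HNeg a))"
definition HBigAnd :: "'p hs list \<Rightarrow> 'p hs" where
  "HBigAnd xs = foldr HAnd xs HTop"
definition HBigOr :: "'p hs list \<Rightarrow> 'p hs" where
  "HBigOr xs = foldr HOr xs HBot"

text \<open>Proposition letters: x_i, z_i^u, s, t, r_i, p_{bar x_i}.\<close>
datatype aprop = PX nat | PZ nat nat | Ps | Pt | PR nat | PXbar nat

text \<open>States: s_0, w_{x_i}, bar w_{x_i}, bar s_i, w_{z_i^u}, bar w_{z_i^u}.\<close>
datatype state = S0 | Wx nat | Wxbar nat | Sbar nat | Wz nat nat | Wzbar nat nat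

definition apX :: "nat \<Rightarrow> aprop set" where "apX n = {PX i | i. 1 \<le> i \<and> i \<le> n}"
definition apZ :: "nat \<Rightarrow> (nat \<Rightarrow> nat) \<Rightarrow> aprop set" where
  "apZ n j = {PZ i u | i u. 1 \<le> i \<and> i \<le> n \<and> 1 \<le> u \<and> u \<le> j i}"
definition apR :: "nat \<Rightarrow> aprop set" where "apR n = {PR i | i. 1 \<le> i \<and> i \<le> n}"
definition apRi :: "nat \<Rightarrow> nat \<Rightarrow> aprop set" where "apRi n i = apR n - {PR i}"

definition KI_W :: "nat \<Rightarrow> (nat \<Rightarrow> nat) \<Rightarrow> state set" where
  "KI_W n j = {S0} \<union> {Wx i | i. 1 \<le> i \<and> i \<le> n} \<union> {Wxbar i | i. 1 \<le> i \<and> i \<le> n}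
     \<union> {Sbar i | i. 1 \<le> i \<and> i \<le> n}
     \<union> {Wz i u | i u. 1 \<le> i \<and> i \<le> n \<and> 1 \<le> u \<and> u \<le> j i}
     \<union> {Wzbar i u | i u. 1 \<le> i \<and> i \<le> n \<and> 1 \<le> u \<and> u \<le> j i}"

fun KI_mu :: "nat \<Rightarrow> (nat \<Rightarrow> nat) \<Rightarrow> state \<Rightarrow> aprop set" where
  "KI_mu n j (Wx i) = apX n \<union> apZ n j \<union> {Ps, Pt} \<union> apRi n i"
| "KI_mu n j (Wxbar i) = (apX n - {PX i}) \<union> apZ n j \<union> {Ps, Pt} \<union> apRi n i \<union> {PXbar i}"
| "KI_mu n j (Wz i u) = apX n \<union> apZ n j \<union> {Ps, Pt} \<union> apRi n i"
| "KI_mu n j (Wzbar i u) = apX n \<union> (apZ n j - {PZ i u}) \<union> {Ps, Pt} \<union> apRi n i"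
| "KI_mu n j (Sbar i) = apX n \<union> apZ n j \<union> {Pt} \<union> apRi n i"
| "KI_mu n j S0 = apX n \<union> apZ n j \<union> {Ps} \<union> apR n"

definition layer :: "nat \<Rightarrow> nat \<Rightarrow> state set" where
  "layer i u = (if u = 0 then {Wx i, Wxbar i} else {Wz i u, Wzbar i u})"

definition KI_delta :: "nat \<Rightarrow> (nat \<Rightarrow> nat) \<Rightarrow> (state \<times> state) set" where
  "KI_delta n j =
     {(Wxbar i, Sbar i) | i. 1 \<le> i \<and> i \<le> n}
   \<union> {(Sbar i, Wx i) | i. 1 \<le> i \<and> i \<le> n}
   \<union> {(a, b) | a b i u. 1 \<le> i \<and> i \<le> n \<and> u < j i \<and> a \<in> layer i u \<and> b \<in> layer i (Suc u)}
   \<union> {(a, b) | a b i. 2 \<le> i \<and> i \<le> n \<and> a \<in> layer i (j i) \<and> b \<in> layer (i - 1) 0}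
   \<union> {(a, S0) | a. 1 \<le> n \<and> a \<in> layer 1 (j 1)}
   \<union> {(S0, S0)}"

definition KI :: "nat \<Rightarrow> (nat \<Rightarrow> nat) \<Rightarrow> (aprop, state) kripke" where
  "KI n j = \<lparr> kW = KI_W n j, kdelta = KI_delta n j, kmu = KI_mu n j, kw0 = Wx n \<rparr>"

primrec ptrans :: "pform \<Rightarrow> aprop hs" where
  "ptrans (PVar v) = (case v of X m \<Rightarrow> HProp (PX m) | Z a b \<Rightarrow> HProp (PZ a b))"
| "ptrans (PNot f) = HNeg (ptrans f)"
| "ptrans (PAnd f g) = HAnd (ptrans f) (ptrans g)"
| "ptrans (POr f g) = HOr (ptrans f) (ptrans g)"
| "ptrans PTop = HTop"
| "ptrans PBot = HBot"

definition len2 :: "aprop hs" where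
  "len2 = HAnd (HB HTop) (HBoxB (HBoxB HBot))"

definition phi_body :: "nat \<Rightarrow> (nat \<Rightarrow> pform) \<Rightarrow> aprop hs \<Rightarrow> aprop hs" where
  "phi_body n F prev =
     HAnd (HAnd (HProp Ps) (HNeg (HProp Pt)))
      (HAnd (HBigAnd (map (\<lambda>i. HImp (HAnd (HProp (PX i)) (HNeg (HProp (PR i)))) (ptrans (F i)))
                          [1..<n+1]))
            (HBoxB (HImp (HBigOr (map (\<lambda>i. HA (HProp (PXbar i))) [1..<n+1]))
                         (HA (HAnd (HNeg (HProp Ps)) (HAnd len2 (HA (HAnd len2 (HNeg prev)))))))))"

primrec psi :: "nat \<Rightarrow> (nat \<Rightarrow> pform) \<Rightarrow> nat \<Rightarrow> aprop hs" where
  "psi n F 0 = HBot"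
| "psi n F (Suc k) = HA (phi_body n F (psi n F k))"

end

theory Submission
  imports Defs
begin

lemma is_track_succ: "is_track K \<rho> \<longleftrightarrow> \<rho> \<noteq> [] \<and> set \<rho> \<subseteq> kW K \<and> successively (\<lambda>a b. (a,b) \<in> kdelta K) \<rho>"
  unfolding is_track_def successively_conv_nth by auto

fun blk :: "state \<Rightarrow> nat" where
  "blk S0 = 0" | "blk (Wx i) = i" | "blk (Wxbar i) = i" | "blk (Sbar i) = i"
| "blk (Wz i u) = i" | "blk (Wzbar i u) = i"

fun lay :: "state \<Rightarrow> nat" where
  "lay (Wz i u) = u" | "lay (Wzbar i u) = u" | "lay _ = 0"

lemma mu_Ps: "Ps \<in> KI_mu n j w \<longleftrightarrow> (\<forall>i. w \<noteq> Sbar i)"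
  by (cases w) (auto simp: apX_def apZ_def apRi_def apR_def)
lemma mu_Pt: "Pt \<in> KI_mu n j w \<longleftrightarrow> w \<noteq> S0"
  by (cases w) (auto simp: apX_def apZ_def apRi_def apR_def)
lemma mu_PX: "1 \<le> i \<Longrightarrow> i \<le> n \<Longrightarrow> PX i \<in> KI_mu n j w \<longleftrightarrow> w \<noteq> Wxbar i"
  by (cases w) (auto simp: apX_def apZ_def apRi_def apR_def)
lemma mu_PR: "1 \<le> i \<Longrightarrow> i \<le> n \<Longrightarrow> PR i \<in> KI_mu n j w \<longleftrightarrow> blk w \<noteq> i"
  by (cases w) (auto simp: apX_def apZ_def apRi_def apR_def)
lemma mu_PZ: "1 \<le> a \<Longrightarrow> a \<le> n \<Longrightarrow> 1 \<le> b \<Longrightarrow> b \<le> j a \<Longrightarrow> PZ a b \<in> KI_mu n j w \<longleftrightarrow> w \<noteq> Wzbar a b"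
  by (cases w) (auto simp: apX_def apZ_def apRi_def apR_def)
lemma mu_PXbar: "PXbar i \<in> KI_mu n j w \<longleftrightarrow> w = Wxbar i"
  by (cases w) (auto simp: apX_def apZ_def apRi_def apR_def)

lemma E1: "(a,b) \<in> KI_delta n j \<Longrightarrow> blk a \<le> Suc (blk b)"
  by (auto simp: KI_delta_def layer_def split: if_splits)
lemma E2: "(a,b) \<in> KI_delta n j \<Longrightarrow> (\<forall>i. a \<noteq> Sbar i) \<Longrightarrow> (\<forall>i. b \<noteq> Sbar i) \<Longrightarrow> b \<noteq> S0
   \<Longrightarrow> blk b < blk a \<or> (blk b = blk a \<and> lay a < lay b)"
  by (auto simp: KI_delta_def layer_def split: if_splits)
lemma E3: "(S0,b) \<in> KI_delta n j \<Longrightarrow> b = S0"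
  by (auto simp: KI_delta_def layer_def split: if_splits)
lemma E4: "(a, Sbar i) \<in> KI_delta n j \<Longrightarrow> a = Wxbar i"
  by (auto simp: KI_delta_def layer_def split: if_splits)
lemma E5: "(Sbar i, b) \<in> KI_delta n j \<Longrightarrow> b = Wx i"
  by (auto simp: KI_delta_def layer_def split: if_splits)
lemma E6: "1 \<le> i \<Longrightarrow> i \<le> n \<Longrightarrow> (Wxbar i, Sbar i) \<in> KI_delta n j \<and> (Sbar i, Wx i) \<in> KI_delta n j"
  by (auto simp: KI_delta_def)
lemma W1: "1 \<le> i \<Longrightarrow> i \<le> n \<Longrightarrow> Wxbar i \<in> KI_W n j \<and> Sbar i \<in> KI_W n j \<and> Wx i \<in> KI_W n j"
  by (auto simp: KI_W_def)

lemma K_simps[simp]: "kW (KI n j) = KI_W n j" "kdelta (KI n j) = KI_delta n j" "kmu (KI n j) = KI_mu n j"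
  by (auto simp: KI_def)

lemma sat_BigOr: "hs_sat K \<rho> (HBigOr xs) \<longleftrightarrow> (\<exists>x\<in>set xs. hs_sat K \<rho> x)"
  by (induction xs) (auto simp: HBigOr_def HOr_def)
lemma sat_BigAnd: "hs_sat K \<rho> (HBigAnd xs) \<longleftrightarrow> (\<forall>x\<in>set xs. hs_sat K \<rho> x)"
  by (induction xs) (auto simp: HBigAnd_def)
lemma sat_Imp: "hs_sat K \<rho> (HImp a b) \<longleftrightarrow> (hs_sat K \<rho> a \<longrightarrow> hs_sat K \<rho> b)"
  by (auto simp: HImp_def)
lemma sat_BoxB: "hs_sat K \<rho> (HBoxB a) \<longleftrightarrow> (\<forall>i. 1 \<le> i \<and> i < length \<rho> \<longrightarrow> hs_sat K (take i \<rho>) a)"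
  by (auto simp: HBoxB_def)
lemma sat_len2: "hs_sat K \<rho> len2 \<longleftrightarrow> length \<rho> = 2"
proof
  assume h: "hs_sat K \<rho> len2"
  then have "2 \<le> length \<rho>" by (auto simp: len2_def)
  moreover have "\<not> 3 \<le> length \<rho>"
  proof
    assume "3 \<le> length \<rho>"
    from h have "\<forall>i. 1 \<le> i \<and> i < length \<rho> \<longrightarrow> hs_sat K (take i \<rho>) (HBoxB HBot)"
      unfolding len2_def by (simp only: hs_sat.simps sat_BoxB) blast
    then have "hs_sat K (take 2 \<rho>) (HBoxB HBot)" using \<open>3 \<le> length \<rho>\<close> by auto
    then show False using \<open>3 \<le> length \<rho>\<close> by (auto simp: sat_BoxB)
  qed
  ultimately show "length \<rho> = 2" by linarith
next
  assume "length \<rho> = 2"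
  then show "hs_sat K \<rho> len2" unfolding len2_def
    by (auto simp: sat_BoxB intro!: exI[of _ 1])
qed

lemma sat_ptrans: "hs_sat K \<rho> (ptrans f) \<longleftrightarrow>
   peval (\<lambda>v. hs_sat K \<rho> (HProp (case v of X m \<Rightarrow> PX m | Z a b \<Rightarrow> PZ a b))) f"
  by (induction f) (auto simp: HOr_def split: var.splits)

lemma peval_cong: "(\<And>v. v \<in> pvars f \<Longrightarrow> \<sigma> v = \<sigma>' v) \<Longrightarrow> peval \<sigma> f = peval \<sigma>' f"
  by (induction f) auto

lemma psi_last: "hs_sat K \<rho> (psi n F k) = hs_sat K [last \<rho>] (psi n F k)"
  by (cases k) auto

lemma len2_obtain: "length xs = 2 \<Longrightarrow> \<exists>a b. xs = [a,b]"
  by (cases xs; cases "tl xs") auto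

lemma track2: "is_track K [a,b] \<longleftrightarrow> a \<in> kW K \<and> b \<in> kW K \<and> (a,b) \<in> kdelta K"
  by (auto simp: is_track_succ)

lemma sat_bigor_xbar: "hs_sat (KI n j) \<rho>0 (HBigOr (map (\<lambda>i. HA (HProp (PXbar i))) [1..<n+1]))
   \<longleftrightarrow> (\<exists>i. 1 \<le> i \<and> i \<le> n \<and> last \<rho>0 = Wxbar i)"
proof
  assume "hs_sat (KI n j) \<rho>0 (HBigOr (map (\<lambda>i. HA (HProp (PXbar i))) [1..<n+1]))"
  then obtain i \<rho>' where i: "1 \<le> i" "i \<le> n" and t: "is_track (KI n j) \<rho>'" "hd \<rho>' = last \<rho>0"
    and p: "\<forall>w\<in>set \<rho>'. PXbar i \<in> KI_mu n j w"
    by (auto simp: sat_BigOr)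
  have "hd \<rho>' \<in> set \<rho>'" using t(1) by (simp add: is_track_def)
  with p t i show "\<exists>i. 1 \<le> i \<and> i \<le> n \<and> last \<rho>0 = Wxbar i" by (auto simp: mu_PXbar)
next
  assume "\<exists>i. 1 \<le> i \<and> i \<le> n \<and> last \<rho>0 = Wxbar i"
  then obtain i where i: "1 \<le> i" "i \<le> n" "last \<rho>0 = Wxbar i" by auto
  have "is_track (KI n j) [Wxbar i]" using W1[OF i(1,2)] by (auto simp: is_track_succ)
  then show "hs_sat (KI n j) \<rho>0 (HBigOr (map (\<lambda>i. HA (HProp (PXbar i))) [1..<n+1]))"
    using i by (auto simp: sat_BigOr mu_PXbar intro!: bexI[of _ i] exI[of _ "[Wxbar i]"])
qed

lemma sat_box_cond:
  assumes i: "1 \<le> i" "i \<le> n" and l: "last \<rho>0 = Wxbar i"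
  shows "hs_sat (KI n j) \<rho>0 (HA (HAnd (HNeg (HProp Ps)) (HAnd len2 (HA (HAnd len2 (HNeg (psi n F k)))))))
     \<longleftrightarrow> \<not> hs_sat (KI n j) [Wx i] (psi n F k)"
proof
  assume "hs_sat (KI n j) \<rho>0 (HA (HAnd (HNeg (HProp Ps)) (HAnd len2 (HA (HAnd len2 (HNeg (psi n F k)))))))"
  then obtain \<rho>' \<rho>'' where t1: "is_track (KI n j) \<rho>'" "hd \<rho>' = Wxbar i" "\<not> (\<forall>w\<in>set \<rho>'. Ps \<in> KI_mu n j w)"
     "length \<rho>' = 2" and t2: "is_track (KI n j) \<rho>''" "hd \<rho>'' = last \<rho>'" "length \<rho>'' = 2"
     "\<not> hs_sat (KI n j) \<rho>'' (psi n F k)"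
    using l by (auto simp: sat_len2)
  obtain a b where ab: "\<rho>' = [a,b]" using len2_obtain[OF t1(4)] by blast
  obtain c d where cd: "\<rho>'' = [c,d]" using len2_obtain[OF t2(3)] by blast
  have a: "a = Wxbar i" using t1 ab by simp
  obtain m where b: "b = Sbar m" using t1(3) ab a by (auto simp: mu_Ps)
  have "(a,b) \<in> KI_delta n j" using t1(1) ab by (simp add: track2)
  then have "m = i" using E4 a b by blast
  have c: "c = Sbar i" using t2(2) ab cd b \<open>m = i\<close> by simp
  have "(c,d) \<in> KI_delta n j" using t2(1) cd by (simp add: track2)
  then have "d = Wx i" using E5 c by blast
  then show "\<not> hs_sat (KI n j) [Wx i] (psi n F k)" using t2(4) cd psi_last[of "KI n j" \<rho>''] by simp
next
  assume h: "\<not> hs_sat (KI n j) [Wx i] (psi n F k)"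
  have t1: "is_track (KI n j) [Wxbar i, Sbar i]" "is_track (KI n j) [Sbar i, Wx i]"
    using E6[OF i] W1[OF i] by (auto simp: track2)
  have h2: "\<not> hs_sat (KI n j) [Sbar i, Wx i] (psi n F k)" using h psi_last[of "KI n j" "[Sbar i, Wx i]"] by simp
  show "hs_sat (KI n j) \<rho>0 (HA (HAnd (HNeg (HProp Ps)) (HAnd len2 (HA (HAnd len2 (HNeg (psi n F k)))))))"
    unfolding hs_sat.simps sat_len2
  proof (intro exI conjI)
    show "is_track (KI n j) [Wxbar i, Sbar i]" "hd [Wxbar i, Sbar i] = last \<rho>0" using t1 l by auto
    show "\<not> (\<forall>w\<in>set [Wxbar i, Sbar i]. Ps \<in> kmu (KI n j) w)" by (simp add: mu_Ps)
    show "is_track (KI n j) [Sbar i, Wx i]" "hd [Sbar i, Wx i] = last [Wxbar i, Sbar i]" using t1 by auto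
    show "\<not> hs_sat (KI n j) [Sbar i, Wx i] (psi n F k)" by (rule h2)
  qed auto
qed


definition sig :: "state list \<Rightarrow> var \<Rightarrow> bool" where
  "sig \<rho> = (\<lambda>v. case v of X m \<Rightarrow> Wxbar m \<notin> set \<rho> | Z a b \<Rightarrow> Wzbar a b \<notin> set \<rho>)"

lemma last_take_Suc: "Suc q \<le> length xs \<Longrightarrow> last (take (Suc q) xs) = xs ! q"
  by (metis last_snoc take_Suc_conv_app_nth Suc_le_lessD)

lemma sat_F:
  assumes wf: "snsat_wf n j F" and i: "1 \<le> i" "i \<le> n"
  shows "hs_sat (KI n j) \<rho> (ptrans (F i)) \<longleftrightarrow> peval (sig \<rho>) (F i)"
  unfolding sat_ptrans
proof (rule peval_cong)
  fix v assume v: "v \<in> pvars (F i)"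
  with wf i have "v \<in> {X m | m. 1 \<le> m \<and> m < i} \<union> {Z i u | u. 1 \<le> u \<and> u \<le> j i}"
    unfolding snsat_wf_def by blast
  then show "hs_sat (KI n j) \<rho> (HProp (case v of X m \<Rightarrow> PX m | Z a b \<Rightarrow> PZ a b)) = sig \<rho> v"
    using i by (auto simp: sig_def mu_PX mu_PZ)
qed

lemma phi_iff:
  assumes wf: "snsat_wf n j F"
  shows "hs_sat (KI n j) \<rho> (phi_body n F (psi n F k)) \<longleftrightarrow>
    (\<forall>w\<in>set \<rho>. \<forall>i. w \<noteq> Sbar i) \<and> S0 \<in> set \<rho> \<and>
    (\<forall>i. 1 \<le> i \<and> i \<le> n \<and> Wxbar i \<notin> set \<rho> \<and> (\<exists>w\<in>set \<rho>. blk w = i) \<longrightarrow> peval (sig \<rho>) (F i)) \<and>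
    (\<forall>q i. Suc q < length \<rho> \<and> 1 \<le> i \<and> i \<le> n \<and> \<rho> ! q = Wxbar i \<longrightarrow> \<not> hs_sat (KI n j) [Wx i] (psi n F k))"
proof -
  have A: "hs_sat (KI n j) \<rho> (HAnd (HProp Ps) (HNeg (HProp Pt))) \<longleftrightarrow> (\<forall>w\<in>set \<rho>. \<forall>i. w \<noteq> Sbar i) \<and> S0 \<in> set \<rho>"
    by (auto simp: mu_Ps mu_Pt)
  have C: "hs_sat (KI n j) \<rho> (HBigAnd (map (\<lambda>i. HImp (HAnd (HProp (PX i)) (HNeg (HProp (PR i)))) (ptrans (F i))) [1..<n+1]))
     \<longleftrightarrow> (\<forall>i. 1 \<le> i \<and> i \<le> n \<and> Wxbar i \<notin> set \<rho> \<and> (\<exists>w\<in>set \<rho>. blk w = i) \<longrightarrow> peval (sig \<rho>) (F i))"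
  proof -
    have e: "hs_sat (KI n j) \<rho> (HImp (HAnd (HProp (PX i)) (HNeg (HProp (PR i)))) (ptrans (F i)))
       \<longleftrightarrow> (Wxbar i \<notin> set \<rho> \<and> (\<exists>w\<in>set \<rho>. blk w = i) \<longrightarrow> peval (sig \<rho>) (F i))"
      if "1 \<le> i" "i \<le> n" for i
      unfolding sat_Imp sat_F[OF wf that] using that by (auto simp: mu_PX mu_PR)
    show ?thesis unfolding sat_BigAnd using e
      by (auto simp del: upt_Suc)
  qed
  have D: "hs_sat (KI n j) \<rho> (HBoxB (HImp (HBigOr (map (\<lambda>i. HA (HProp (PXbar i))) [1..<n+1]))
                         (HA (HAnd (HNeg (HProp Ps)) (HAnd len2 (HA (HAnd len2 (HNeg (psi n F k)))))))))
     \<longleftrightarrow> (\<forall>q i. Suc q < length \<rho> \<and> 1 \<le> i \<and> i \<le> n \<and> \<rho> ! q = Wxbar i \<longrightarrow> \<not> hs_sat (KI n j) [Wx i] (psi n F k))"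
    (is "?L \<longleftrightarrow> ?R")
  proof
    assume L: ?L
    show ?R
    proof (intro allI impI)
      fix q i assume h: "Suc q < length \<rho> \<and> 1 \<le> i \<and> i \<le> n \<and> \<rho> ! q = Wxbar i"
      then have l: "last (take (Suc q) \<rho>) = Wxbar i" by (simp add: last_take_Suc)
      from L h have "hs_sat (KI n j) (take (Suc q) \<rho>) (HImp (HBigOr (map (\<lambda>i. HA (HProp (PXbar i))) [1..<n+1]))
                         (HA (HAnd (HNeg (HProp Ps)) (HAnd len2 (HA (HAnd len2 (HNeg (psi n F k))))))))"
        unfolding sat_BoxB by auto
      then show "\<not> hs_sat (KI n j) [Wx i] (psi n F k)"
        unfolding sat_Imp sat_bigor_xbar using h l sat_box_cond[of i n "take (Suc q) \<rho>" j F k] by auto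
    qed
  next
    assume R: ?R
    show ?L unfolding sat_BoxB
    proof (intro allI impI)
      fix p assume p: "1 \<le> p \<and> p < length \<rho>"
      then obtain q where q: "p = Suc q" by (cases p) auto
      show "hs_sat (KI n j) (take p \<rho>) (HImp (HBigOr (map (\<lambda>i. HA (HProp (PXbar i))) [1..<n+1]))
                         (HA (HAnd (HNeg (HProp Ps)) (HAnd len2 (HA (HAnd len2 (HNeg (psi n F k))))))))"
        unfolding sat_Imp sat_bigor_xbar
      proof
        assume "\<exists>i. 1 \<le> i \<and> i \<le> n \<and> last (take p \<rho>) = Wxbar i"
        then obtain i where i: "1 \<le> i" "i \<le> n" "last (take p \<rho>) = Wxbar i" by auto
        then have "\<rho> ! q = Wxbar i" using p q by (simp add: last_take_Suc)
        then have "\<not> hs_sat (KI n j) [Wx i] (psi n F k)" using R p q i by auto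
        then show "hs_sat (KI n j) (take p \<rho>) (HA (HAnd (HNeg (HProp Ps)) (HAnd len2 (HA (HAnd len2 (HNeg (psi n F k)))))))"
          using sat_box_cond[OF i] by blast
      qed
    qed
  qed
  show ?thesis unfolding phi_body_def hs_sat.simps(3) using A C D by (simp only: hs_sat.simps conj_assoc)
qed


lemma vals_stable: "m \<le> k \<Longrightarrow> snsat_vals F k m = snsat_vals F m m"
  by (induction k) (auto simp: le_Suc_eq)

lemma sat_with_cong:
  assumes wf: "snsat_wf n j F" and i: "1 \<le> i" "i \<le> n" and eq: "\<And>m. 1 \<le> m \<Longrightarrow> m < i \<Longrightarrow> val m = val' m"
  shows "sat_with (F i) val = sat_with (F i) val'"
proof -
  have "peval (\<lambda>v. case v of X m \<Rightarrow> val m | Z a b \<Rightarrow> \<zeta> a b) (F i) =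
        peval (\<lambda>v. case v of X m \<Rightarrow> val' m | Z a b \<Rightarrow> \<zeta> a b) (F i)" for \<zeta>
  proof (rule peval_cong)
    fix v assume "v \<in> pvars (F i)"
    with wf i have "v \<in> {X m | m. 1 \<le> m \<and> m < i} \<union> {Z i u | u. 1 \<le> u \<and> u \<le> j i}"
      unfolding snsat_wf_def by blast
    then show "(case v of X m \<Rightarrow> val m | Z a b \<Rightarrow> \<zeta> a b) = (case v of X m \<Rightarrow> val' m | Z a b \<Rightarrow> \<zeta> a b)"
      using eq by auto
  qed
  then show ?thesis unfolding sat_with_def by simp
qed

lemma factV:
  assumes wf: "snsat_wf n j F" and i: "1 \<le> i" "i \<le> n"
  shows "snsat_val n F i \<longleftrightarrow> sat_with (F i) (snsat_val n F)"
proof -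
  obtain i' where i': "i = Suc i'" using i by (cases i) auto
  have "snsat_val n F i = snsat_vals F i i" unfolding snsat_val_def using vals_stable[of i n F] i by simp
  also have "\<dots> = sat_with (F i) (snsat_vals F i')" using i' by simp
  also have "\<dots> = sat_with (F i) (snsat_val n F)"
  proof (rule sat_with_cong[OF wf i])
    fix m assume m: "1 \<le> m" "m < i"
    have "snsat_vals F i' m = snsat_vals F m m" using vals_stable[of m i' F] m i' by simp
    also have "\<dots> = snsat_val n F m" unfolding snsat_val_def using vals_stable[of m n F] m i by simp
    finally show "snsat_vals F i' m = snsat_val n F m" .
  qed
  finally show ?thesis .
qed

lemma S0_absorb:
  assumes "successively (\<lambda>a b. (a,b) \<in> KI_delta n j) \<rho>" "\<rho> ! q = S0" "q \<le> p" "p < length \<rho>"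
  shows "\<rho> ! p = S0"
  using assms(3,4)
proof (induction p)
  case 0 then show ?case using assms(2) by simp
next
  case (Suc p)
  show ?case
  proof (cases "q = Suc p")
    case True then show ?thesis using assms(2) by simp
  next
    case False
    then have "\<rho> ! p = S0" using Suc by simp
    moreover have "(\<rho> ! p, \<rho> ! Suc p) \<in> KI_delta n j" using successively_nth[OF assms(1)] Suc by simp
    ultimately show ?thesis using E3 by simp
  qed
qed

lemma nat_ivt:
  fixes f :: "nat \<Rightarrow> nat"
  assumes "\<forall>p<q. f p \<le> Suc (f (Suc p))" "i \<le> f 0" "f q \<le> i"
  shows "\<exists>p\<le>q. f p = i"
  using assms
proof (induction q)
  case 0 then show ?case by auto
next
  case (Suc q)
  show ?case
  proof (cases "f q \<le> i")
    case True
    have "\<forall>p<q. f p \<le> Suc (f (Suc p))" using Suc.prems(1) by simp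
    then obtain p where "p \<le> q" "f p = i" using Suc.IH Suc.prems(2) True by blast
    then show ?thesis using le_SucI by blast
  next
    case False
    have "f q \<le> Suc (f (Suc q))" using Suc.prems(1) by simp
    then have "f (Suc q) = i" using Suc.prems(3) False by linarith
    then show ?thesis by blast
  qed
qed

lemma strict_dec:
  assumes sc: "successively (\<lambda>a b. (a,b) \<in> KI_delta n j) \<rho>"
    and ns: "\<forall>w\<in>set \<rho>. \<forall>i. w \<noteq> Sbar i"
    and q: "0 < q" "q < length \<rho>" "\<rho> ! q \<noteq> S0"
  shows "blk (\<rho> ! q) < blk (\<rho> ! 0) \<or> (blk (\<rho> ! q) = blk (\<rho> ! 0) \<and> lay (\<rho> ! 0) < lay (\<rho> ! q))"
  using q
proof (induction q)
  case 0 then show ?case by simp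
next
  case (Suc q)
  have e: "(\<rho> ! q, \<rho> ! Suc q) \<in> KI_delta n j" using successively_nth[OF sc] Suc by simp
  have nq: "\<rho> ! q \<noteq> S0"
  proof
    assume "\<rho> ! q = S0"
    then have "\<rho> ! Suc q = S0" using e E3 by simp
    then show False using Suc.prems(3) by simp
  qed
  have m1: "\<rho> ! q \<in> set \<rho>" "\<rho> ! Suc q \<in> set \<rho>" using Suc.prems(2) by simp_all
  have s1: "\<forall>i. \<rho> ! q \<noteq> Sbar i" "\<forall>i. \<rho> ! Suc q \<noteq> Sbar i" using ns m1 by blast+
  have d: "blk (\<rho> ! Suc q) < blk (\<rho> ! q) \<or> (blk (\<rho> ! Suc q) = blk (\<rho> ! q) \<and> lay (\<rho> ! q) < lay (\<rho> ! Suc q))"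
    using E2[OF e s1] Suc.prems by simp
  show ?case
  proof (cases q)
    case 0 then show ?thesis using d by simp
  next
    case (Suc q')
    then have "blk (\<rho> ! q) < blk (\<rho> ! 0) \<or> (blk (\<rho> ! q) = blk (\<rho> ! 0) \<and> lay (\<rho> ! 0) < lay (\<rho> ! q))"
      using Suc.IH Suc.prems nq by simp
    then show ?thesis using d by auto
  qed
qed


lemma sound:
  assumes wf: "snsat_wf n j F" and r: "1 \<le> r" "r \<le> n"
    and IH: "\<forall>i. 1 \<le> i \<longrightarrow> i < r \<longrightarrow> (snsat_val n F i \<longleftrightarrow> hs_sat (KI n j) [Wx i] (psi n F k))"
    and tr: "is_track (KI n j) \<rho>" and hd: "hd \<rho> = Wx r \<or> hd \<rho> = Wxbar r"
    and phi: "hs_sat (KI n j) \<rho> (phi_body n F (psi n F k))"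
  shows "(hd \<rho> = Wx r \<longrightarrow> snsat_val n F r) \<and> (hd \<rho> = Wxbar r \<longrightarrow> \<not> hs_sat (KI n j) [Wx r] (psi n F k))"
proof -
  let ?v = "snsat_val n F"
  have ne: "\<rho> \<noteq> []" and sc: "successively (\<lambda>a b. (a,b) \<in> KI_delta n j) \<rho>"
    using tr by (simp_all add: is_track_succ)
  have h0: "\<rho> ! 0 = hd \<rho>" using ne by (simp add: hd_conv_nth)
  note P = phi[unfolded phi_iff[OF wf]]
  have NS: "\<forall>w\<in>set \<rho>. \<forall>i. w \<noteq> Sbar i" using P by blast
  have FC: "\<And>i. 1 \<le> i \<Longrightarrow> i \<le> n \<Longrightarrow> Wxbar i \<notin> set \<rho> \<Longrightarrow> (\<exists>w\<in>set \<rho>. blk w = i) \<Longrightarrow> peval (sig \<rho>) (F i)"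
    using P by blast
  have BC: "\<And>q i. Suc q < length \<rho> \<Longrightarrow> 1 \<le> i \<Longrightarrow> i \<le> n \<Longrightarrow> \<rho> ! q = Wxbar i \<Longrightarrow> \<not> hs_sat (KI n j) [Wx i] (psi n F k)"
    using P by blast
  have "S0 \<in> set \<rho>" using P by blast
  then obtain qs where qs: "qs < length \<rho>" "\<rho> ! qs = S0" by (auto simp: in_set_conv_nth)
  have pos: "Suc q < length \<rho>" if "q < length \<rho>" "\<rho> ! q \<noteq> S0" for q
  proof (rule ccontr)
    assume "\<not> Suc q < length \<rho>"
    then have "qs \<le> q" using qs that by linarith
    then have "\<rho> ! q = S0" using S0_absorb[OF sc qs(2)] that by blast
    then show False using that by simp
  qed
  have hr: "blk (\<rho> ! 0) = r" "lay (\<rho> ! 0) = 0" using hd h0 by auto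
  have visit: "\<exists>w\<in>set \<rho>. blk w = i" if "i \<le> r" for i
  proof -
    have "\<forall>p<qs. blk (\<rho> ! p) \<le> Suc (blk (\<rho> ! Suc p))"
    proof (intro allI impI)
      fix p assume "p < qs"
      then have "Suc p < length \<rho>" using qs by linarith
      then show "blk (\<rho> ! p) \<le> Suc (blk (\<rho> ! Suc p))" using successively_nth[OF sc] E1 by blast
    qed
    moreover have "i \<le> blk (\<rho> ! 0)" using hr that by simp
    moreover have "blk (\<rho> ! qs) \<le> i" using qs by simp
    ultimately obtain p where "p \<le> qs" "blk (\<rho> ! p) = i"
      using nat_ivt[of qs "\<lambda>p. blk (\<rho> ! p)" i] by blast
    then show ?thesis using qs by (metis le_less_trans nth_mem)
  qed
  have main: "\<forall>i. 1 \<le> i \<longrightarrow> i \<le> r \<longrightarrow> (Wxbar i \<notin> set \<rho> \<longrightarrow> ?v i) \<and> (i < r \<longrightarrow> Wxbar i \<in> set \<rho> \<longrightarrow> \<not> ?v i)"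
  proof (intro allI)
    fix i show "1 \<le> i \<longrightarrow> i \<le> r \<longrightarrow> (Wxbar i \<notin> set \<rho> \<longrightarrow> ?v i) \<and> (i < r \<longrightarrow> Wxbar i \<in> set \<rho> \<longrightarrow> \<not> ?v i)"
    proof (induction i rule: less_induct)
      case (less i)
      show ?case
      proof (intro impI conjI)
        assume i: "1 \<le> i" "i \<le> r"
        {
          assume nb: "Wxbar i \<notin> set \<rho>"
          have pe: "peval (sig \<rho>) (F i)" using FC[OF i(1) _ nb visit[OF i(2)]] i r by simp
          have "peval (\<lambda>v. case v of X m \<Rightarrow> ?v m | Z a b \<Rightarrow> Wzbar a b \<notin> set \<rho>) (F i) = peval (sig \<rho>) (F i)"
          proof (rule peval_cong)
            fix x assume "x \<in> pvars (F i)"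
            with wf i r have "x \<in> {X m | m. 1 \<le> m \<and> m < i} \<union> {Z i u | u. 1 \<le> u \<and> u \<le> j i}"
              unfolding snsat_wf_def by auto
            then show "(case x of X m \<Rightarrow> ?v m | Z a b \<Rightarrow> Wzbar a b \<notin> set \<rho>) = sig \<rho> x"
            proof
              assume "x \<in> {X m | m. 1 \<le> m \<and> m < i}"
              then obtain m where m: "x = X m" "1 \<le> m" "m < i" by blast
              have "(Wxbar m \<notin> set \<rho> \<longrightarrow> ?v m) \<and> (m < r \<longrightarrow> Wxbar m \<in> set \<rho> \<longrightarrow> \<not> ?v m)"
                using less.IH[OF m(3)] m i by simp
              then show ?thesis using m i by (auto simp: sig_def)
            qed (auto simp: sig_def)
          qed
          with pe have "sat_with (F i) ?v" unfolding sat_with_def by blast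
          then show "?v i" using factV[OF wf i(1)] i r by simp
        }
        {
          assume ir: "i < r" and b: "Wxbar i \<in> set \<rho>"
          then obtain q where q: "q < length \<rho>" "\<rho> ! q = Wxbar i" by (auto simp: in_set_conv_nth)
          then have "Suc q < length \<rho>" using pos by simp
          then have "\<not> hs_sat (KI n j) [Wx i] (psi n F k)" using BC q i r by simp
          then show "\<not> ?v i" using IH i ir by simp
        }
      qed
    qed
  qed
  show ?thesis
  proof (intro conjI impI)
    assume h: "hd \<rho> = Wx r"
    have "Wxbar r \<notin> set \<rho>"
    proof
      assume "Wxbar r \<in> set \<rho>"
      then obtain q where q: "q < length \<rho>" "\<rho> ! q = Wxbar r" by (auto simp: in_set_conv_nth)
      have "q \<noteq> 0"
      proof
        assume "q = 0"
        then have "Wxbar r = Wx r" using q(2) h h0 by simp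
        then show False by simp
      qed
      then show False using strict_dec[OF sc NS _ q(1)] q hr by simp
    qed
    then show "?v r" using main r by simp
  next
    assume h: "hd \<rho> = Wxbar r"
    have "Suc 0 < length \<rho>" using pos[of 0] ne h h0 by simp
    then show "\<not> hs_sat (KI n j) [Wx r] (psi n F k)" using BC[of 0 r] h h0 r by simp
  qed
qed


declare upt_Suc[simp del]

definition st :: "(nat \<Rightarrow> bool) \<Rightarrow> (nat \<Rightarrow> nat \<Rightarrow> bool) \<Rightarrow> nat \<Rightarrow> nat \<Rightarrow> state" where
  "st cx cz m u = (if u = 0 then (if cx m then Wx m else Wxbar m) else (if cz m u then Wz m u else Wzbar m u))"

primrec bpath :: "(nat \<Rightarrow> nat) \<Rightarrow> (nat \<Rightarrow> bool) \<Rightarrow> (nat \<Rightarrow> nat \<Rightarrow> bool) \<Rightarrow> nat \<Rightarrow> state list" where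
  "bpath j cx cz 0 = [S0]"
| "bpath j cx cz (Suc i) = map (st cx cz (Suc i)) [0..<Suc (j (Suc i))] @ bpath j cx cz i"

lemma set_bpath: "set (bpath j cx cz i) = insert S0 {st cx cz m u | m u. 1 \<le> m \<and> m \<le> i \<and> u \<le> j m}"
proof (induction i)
  case 0 then show ?case by simp
next
  case (Suc i)
  have "set (map (st cx cz (Suc i)) [0..<Suc (j (Suc i))]) = {st cx cz (Suc i) u | u. u \<le> j (Suc i)}"
    by (auto simp: less_Suc_eq_le)
  then show ?case using Suc by (auto simp: le_Suc_eq)
qed

lemma st_blk: "blk (st cx cz m u) = m" by (simp add: st_def)
lemma st_Sbar: "st cx cz m u \<noteq> Sbar i" by (simp add: st_def)
lemma st_S0: "st cx cz m u \<noteq> S0" by (simp add: st_def)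
lemma st_Sbar': "Sbar i \<noteq> st cx cz m u" by (simp add: st_def)
lemma st_S0': "S0 \<noteq> st cx cz m u" by (simp add: st_def)
lemma st_Wxbar: "st cx cz m u = Wxbar i \<longleftrightarrow> m = i \<and> u = 0 \<and> \<not> cx m" by (auto simp: st_def)
lemma st_Wzbar: "1 \<le> b \<Longrightarrow> st cx cz m u = Wzbar a b \<longleftrightarrow> m = a \<and> u = b \<and> \<not> cz m u" by (auto simp: st_def)
lemma st_Wxbar': "Wxbar i = st cx cz m u \<longleftrightarrow> m = i \<and> u = 0 \<and> \<not> cx m" by (auto simp: st_def)
lemma st_Wzbar': "1 \<le> b \<Longrightarrow> Wzbar a b = st cx cz m u \<longleftrightarrow> m = a \<and> u = b \<and> \<not> cz m u" by (auto simp: st_def)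

lemma Wxbar_in: "Wxbar m \<in> set (bpath j cx cz r) \<longleftrightarrow> 1 \<le> m \<and> m \<le> r \<and> \<not> cx m"
  unfolding set_bpath by (auto simp: st_Wxbar')
lemma Wzbar_in: "1 \<le> b \<Longrightarrow> b \<le> j a \<Longrightarrow> Wzbar a b \<in> set (bpath j cx cz r) \<longleftrightarrow> 1 \<le> a \<and> a \<le> r \<and> \<not> cz a b"
  unfolding set_bpath by (auto simp: st_Wzbar')
lemma blk_in: "w \<in> set (bpath j cx cz r) \<Longrightarrow> blk w \<le> r"
  unfolding set_bpath by (auto simp: st_blk)
lemma Sbar_in: "Sbar i \<notin> set (bpath j cx cz r)"
  unfolding set_bpath by (auto simp: st_Sbar')
lemma st0_in: "1 \<le> m \<Longrightarrow> m \<le> r \<Longrightarrow> st cx cz m 0 \<in> set (bpath j cx cz r)"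
  unfolding set_bpath by blast
lemma hd_bpath: "hd (bpath j cx cz (Suc i)) = st cx cz (Suc i) 0"
  by (simp add: upt_conv_Cons)

lemma st_layer: "st cx cz m u \<in> layer m u" by (simp add: st_def layer_def)

lemma edge_in: "1 \<le> i \<Longrightarrow> i \<le> n \<Longrightarrow> u < j i \<Longrightarrow> a \<in> layer i u \<Longrightarrow> b \<in> layer i (Suc u) \<Longrightarrow> (a,b) \<in> KI_delta n j"
  unfolding KI_delta_def by (intro UnI1 UnI2) auto
lemma edge_down: "2 \<le> i \<Longrightarrow> i \<le> n \<Longrightarrow> a \<in> layer i (j i) \<Longrightarrow> b \<in> layer (i - 1) 0 \<Longrightarrow> (a,b) \<in> KI_delta n j"
  unfolding KI_delta_def by (intro UnI1 UnI2) auto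
lemma edge_S0: "1 \<le> n \<Longrightarrow> a \<in> layer 1 (j 1) \<Longrightarrow> (a,S0) \<in> KI_delta n j"
  unfolding KI_delta_def by (intro UnI1 UnI2) auto

lemma succ_upt: "(\<And>u. a \<le> u \<Longrightarrow> Suc u < b \<Longrightarrow> P u (Suc u)) \<Longrightarrow> successively P [a..<b]"
  by (auto simp: successively_conv_nth)

lemma track_bpath: "i \<le> n \<Longrightarrow> is_track (KI n j) (bpath j cx cz i)"
proof -
  assume i: "i \<le> n"
  have W: "set (bpath j cx cz i) \<subseteq> KI_W n j"
    using i unfolding set_bpath by (auto simp: st_def KI_W_def)
  have "successively (\<lambda>a b. (a,b) \<in> KI_delta n j) (bpath j cx cz i)"
    using i
  proof (induction i)
    case 0 then show ?case by simp
  next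
    case (Suc i)
    have m: "successively (\<lambda>a b. (a,b) \<in> KI_delta n j) (map (st cx cz (Suc i)) [0..<Suc (j (Suc i))])"
      unfolding successively_map
    proof (rule succ_upt)
      fix u assume "0 \<le> u" "Suc u < Suc (j (Suc i))"
      then show "(st cx cz (Suc i) u, st cx cz (Suc i) (Suc u)) \<in> KI_delta n j"
        using Suc.prems st_layer[of cx cz "Suc i" u] st_layer[of cx cz "Suc i" "Suc u"]
        by (intro edge_in) auto
    qed
    have l: "last (map (st cx cz (Suc i)) [0..<Suc (j (Suc i))]) = st cx cz (Suc i) (j (Suc i))"
      by (simp add: upt_Suc)
    have e: "(st cx cz (Suc i) (j (Suc i)), hd (bpath j cx cz i)) \<in> KI_delta n j"
    proof (cases i)
      case 0 then show ?thesis using Suc.prems st_layer[of cx cz "Suc i" "j (Suc i)"]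
        by (auto intro: edge_S0)
    next
      case (Suc i')
      then show ?thesis using Suc.prems st_layer[of cx cz "Suc i" "j (Suc i)"] st_layer[of cx cz i 0]
        hd_bpath[of j cx cz i'] by (intro edge_down) auto
    qed
    show ?case using m Suc e l by (simp add: successively_append_iff)
  qed
  moreover have "bpath j cx cz i \<noteq> []" by (cases i) auto
  ultimately show ?thesis using W by (simp add: is_track_succ)
qed


lemma complete:
  assumes wf: "snsat_wf n j F" and r: "1 \<le> r" "r \<le> n"
    and cxv: "\<forall>m. 1 \<le> m \<longrightarrow> m < r \<longrightarrow> cx m = snsat_val n F m"
    and cxr: "cx r \<longrightarrow> snsat_val n F r"
    and bad: "\<forall>m. 1 \<le> m \<longrightarrow> m \<le> r \<longrightarrow> \<not> cx m \<longrightarrow> \<not> hs_sat (KI n j) [Wx m] (psi n F k)"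
  shows "hs_sat (KI n j) [if cx r then Wx r else Wxbar r] (psi n F (Suc k))"
proof -
  let ?v = "snsat_val n F"
  define \<zeta> where "\<zeta> a = (SOME z. peval (\<lambda>v. case v of X m \<Rightarrow> ?v m | Z a' b \<Rightarrow> z a' b) (F a))" for a
  define cz where "cz a b = \<zeta> a a b" for a b
  define \<rho> where "\<rho> = bpath j cx cz r"
  obtain r' where r': "r = Suc r'" using r by (cases r) auto
  have hd: "hd \<rho> = (if cx r then Wx r else Wxbar r)"
    unfolding \<rho>_def r' hd_bpath by (simp add: st_def)
  have tr: "is_track (KI n j) \<rho>" unfolding \<rho>_def using track_bpath r by simp
  have NS: "\<forall>w\<in>set \<rho>. \<forall>i. w \<noteq> Sbar i" unfolding \<rho>_def using Sbar_in by metis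
  have S0: "S0 \<in> set \<rho>" unfolding \<rho>_def set_bpath by simp
  have FC: "peval (sig \<rho>) (F i)" if i: "1 \<le> i" "i \<le> n" "Wxbar i \<notin> set \<rho>" "\<exists>w\<in>set \<rho>. blk w = i" for i
  proof -
    have ir: "i \<le> r" using i(4) blk_in unfolding \<rho>_def by blast
    have cxi: "cx i" using i(3) ir i(1) unfolding \<rho>_def Wxbar_in by simp
    have vi: "?v i" using cxi cxv cxr ir i(1) by (cases "i = r") auto
    then have "sat_with (F i) ?v" using factV[OF wf i(1,2)] by simp
    then have "\<exists>z. peval (\<lambda>v. case v of X m \<Rightarrow> ?v m | Z a' b \<Rightarrow> z a' b) (F i)" unfolding sat_with_def by blast
    then have pz: "peval (\<lambda>v. case v of X m \<Rightarrow> ?v m | Z a' b \<Rightarrow> \<zeta> i a' b) (F i)"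
      unfolding \<zeta>_def by (rule someI_ex)
    have "peval (\<lambda>v. case v of X m \<Rightarrow> ?v m | Z a' b \<Rightarrow> \<zeta> i a' b) (F i) = peval (sig \<rho>) (F i)"
    proof (rule peval_cong)
      fix x assume "x \<in> pvars (F i)"
      with wf i have "x \<in> {X m | m. 1 \<le> m \<and> m < i} \<union> {Z i u | u. 1 \<le> u \<and> u \<le> j i}"
        unfolding snsat_wf_def by auto
      then show "(case x of X m \<Rightarrow> ?v m | Z a' b \<Rightarrow> \<zeta> i a' b) = sig \<rho> x"
      proof
        assume "x \<in> {X m | m. 1 \<le> m \<and> m < i}"
        then obtain m where m: "x = X m" "1 \<le> m" "m < i" by blast
        then show ?thesis using ir cxv unfolding sig_def \<rho>_def Wxbar_in by auto
      next
        assume "x \<in> {Z i u | u. 1 \<le> u \<and> u \<le> j i}"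
        then obtain u where u: "x = Z i u" "1 \<le> u" "u \<le> j i" by blast
        have "Wzbar i u \<in> set \<rho> \<longleftrightarrow> \<not> cz i u"
          using Wzbar_in[of u j i cx cz r, OF u(2,3)] ir i(1) unfolding \<rho>_def by simp
        then show ?thesis using u unfolding sig_def by (simp add: cz_def)
      qed
    qed
    with pz show ?thesis by simp
  qed
  have BC: "\<not> hs_sat (KI n j) [Wx i] (psi n F k)"
    if q: "Suc q < length \<rho>" "1 \<le> i" "i \<le> n" "\<rho> ! q = Wxbar i" for q i
  proof -
    have "Wxbar i \<in> set \<rho>" using q by (metis Suc_lessD nth_mem)
    then have "1 \<le> i \<and> i \<le> r \<and> \<not> cx i" unfolding \<rho>_def Wxbar_in .
    then show ?thesis using bad by simp
  qed
  have "hs_sat (KI n j) \<rho> (phi_body n F (psi n F k))"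
    unfolding phi_iff[OF wf] using NS S0 FC BC by blast
  then show ?thesis using tr hd by auto
qed

theorem mainTheorem5:
  fixes n :: nat and j :: "nat \<Rightarrow> nat" and F :: "nat \<Rightarrow> pform" and k r :: nat
  assumes "snsat_wf n j F"
    and "k \<le> n + 1"
    and "1 \<le> r" and "r \<le> n"
  shows "(r \<le> k \<longrightarrow> (snsat_val n F r \<longleftrightarrow> hs_sat (KI n j) [Wx r] (psi n F k)))
       \<and> (r + 1 \<le> k \<longrightarrow> (\<not> snsat_val n F r \<longleftrightarrow> hs_sat (KI n j) [Wxbar r] (psi n F k)))"
proof -
  note wf = assms(1)
  let ?v = "snsat_val n F"
  have stepA: "hs_sat (KI n j) [Wx r] (psi n F (Suc k)) \<longleftrightarrow> ?v r"
    if r: "1 \<le> r" "r \<le> n" and IH: "\<forall>i. 1 \<le> i \<longrightarrow> i < r \<longrightarrow> (?v i \<longleftrightarrow> hs_sat (KI n j) [Wx i] (psi n F k))"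
    for r k
  proof
    assume "hs_sat (KI n j) [Wx r] (psi n F (Suc k))"
    then obtain \<rho> where "is_track (KI n j) \<rho>" "hd \<rho> = Wx r" "hs_sat (KI n j) \<rho> (phi_body n F (psi n F k))"
      by auto
    then show "?v r" using sound[OF wf r IH] by blast
  next
    assume vr: "?v r"
    have "hs_sat (KI n j) [if ?v r then Wx r else Wxbar r] (psi n F (Suc k))"
      by (rule complete[OF wf r]) (use IH vr in auto)
    then show "hs_sat (KI n j) [Wx r] (psi n F (Suc k))" using vr by simp
  qed
  have stepB: "hs_sat (KI n j) [Wxbar r] (psi n F (Suc k)) \<longleftrightarrow> \<not> hs_sat (KI n j) [Wx r] (psi n F k)"
    if r: "1 \<le> r" "r \<le> n" and IH: "\<forall>i. 1 \<le> i \<longrightarrow> i < r \<longrightarrow> (?v i \<longleftrightarrow> hs_sat (KI n j) [Wx i] (psi n F k))"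
    for r k
  proof
    assume "hs_sat (KI n j) [Wxbar r] (psi n F (Suc k))"
    then obtain \<rho> where "is_track (KI n j) \<rho>" "hd \<rho> = Wxbar r" "hs_sat (KI n j) \<rho> (phi_body n F (psi n F k))"
      by auto
    then show "\<not> hs_sat (KI n j) [Wx r] (psi n F k)" using sound[OF wf r IH] by blast
  next
    assume nr: "\<not> hs_sat (KI n j) [Wx r] (psi n F k)"
    have "hs_sat (KI n j) [if (?v(r := False)) r then Wx r else Wxbar r] (psi n F (Suc k))"
      by (rule complete[OF wf r]) (use IH nr in auto)
    then show "hs_sat (KI n j) [Wxbar r] (psi n F (Suc k))" by simp
  qed
  have P: "\<forall>r. 1 \<le> r \<longrightarrow> r \<le> n \<longrightarrow> r \<le> k \<longrightarrow> (?v r \<longleftrightarrow> hs_sat (KI n j) [Wx r] (psi n F k))" for k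
  proof (induction k)
    case 0 then show ?case by simp
  next
    case (Suc k)
    show ?case
    proof (intro allI impI)
      fix r assume r: "1 \<le> r" "r \<le> n" "r \<le> Suc k"
      have IH: "\<forall>i. 1 \<le> i \<longrightarrow> i < r \<longrightarrow> (?v i \<longleftrightarrow> hs_sat (KI n j) [Wx i] (psi n F k))"
        using Suc.IH r by auto
      show "?v r \<longleftrightarrow> hs_sat (KI n j) [Wx r] (psi n F (Suc k))" using stepA[OF r(1,2) IH] by simp
    qed
  qed
  show ?thesis
  proof (intro conjI impI)
    assume "r \<le> k" then show "?v r \<longleftrightarrow> hs_sat (KI n j) [Wx r] (psi n F k)" using P assms by blast
  next
    assume rk: "r + 1 \<le> k"
    then obtain k' where k': "k = Suc k'" by (cases k) auto
    have IH: "\<forall>i. 1 \<le> i \<longrightarrow> i < r \<longrightarrow> (?v i \<longleftrightarrow> hs_sat (KI n j) [Wx i] (psi n F k'))"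
      using P[of k'] rk k' assms by auto
    have "?v r \<longleftrightarrow> hs_sat (KI n j) [Wx r] (psi n F k')" using P[of k'] rk k' assms by auto
    then show "\<not> ?v r \<longleftrightarrow> hs_sat (KI n j) [Wxbar r] (psi n F k)"
      using stepB[OF assms(3,4) IH] k' by simp
  qed
qed

end
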